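(* Fix $p$ with $\tfrac{1}{2}<p<1$ and put $r=\dfrac{1-p}{p}$. Define the sequence $(a_k)_{k\ge 0}$ by $a_0=0$ and $a_k=(1-p)+p\,a_{k-1}^2$ for $k\geq 1$. Then $\lim_{k\to\infty}a_k=r$, and the limit \[ \lim_{k\to\infty}\frac{r-a_k}{(2\,r\,p)^k} \] exists and satisfies \[ 0<\lim_{k\to\infty}\frac{r-a_k}{(2\,r\,p)^k}=r\prod_{j=0}^{\infty}\frac{r+a_j}{2r}<1 . \]
   Context: Here $2rp=2(1-p)$. This recurrence arises in the study of random Galton–Watson binary tree heights. *)

theory Defs
  imports "HOL-Analysis.Analysis"
begin

fun gw_seq :: "real \<Rightarrow> nat \<Rightarrow> real" where
  "gw_seq p 0 = 0"
| "gw_seq p (Suc k) = (1 - p) + p * (gw_seq p k)^2"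

end

theory Submission
  imports Defs
begin

theorem mainTheorem1:
  fixes p :: real
  assumes "1/2 < p" and "p < 1"
  defines "r \<equiv> (1 - p) / p"
  shows "gw_seq p \<longlonglongrightarrow> r \<and>
         (\<exists>L P. (\<lambda>k. (r - gw_seq p k) / (2 * r * p) ^ k) \<longlonglongrightarrow> L
            \<and> (\<lambda>j. (r + gw_seq p j) / (2 * r)) has_prod P
            \<and> 0 < L \<and> L = r * P \<and> L < 1)"
proof -
  define a where "a = gw_seq p"
  define q where "q = 2 * r * p"
  define b where "b = (\<lambda>j. (r + a j) / (2 * r))"
  have p0: "p > 0" using assms by simp
  have r0: "r > 0" unfolding r_def using assms by simp
  have r1: "r < 1" unfolding r_def using assms by (simp add: field_simps)
  have q_eq: "q = 2 * (1 - p)" unfolding q_def r_def using p0 by simp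
  have q0: "q > 0" and q1: "q < 1" using q_eq assms by auto
  have fix_r: "1 - p + p * r^2 = r"
    unfolding r_def using p0 by (simp add: field_simps power2_eq_square)
  have rec: "r - a (Suc k) = p * (r + a k) * (r - a k)" for k
  proof -
    have "r - a (Suc k) = (1 - p + p * r^2) - (1 - p + p * (a k)^2)"
      using fix_r by (simp add: a_def)
    thus ?thesis by (simp add: algebra_simps power2_eq_square)
  qed
  have bnd: "0 \<le> a k \<and> a k < r" for k
  proof (induction k)
    case 0 then show ?case using r0 by (simp add: a_def)
  next
    case (Suc k)
    have "0 \<le> a (Suc k)" unfolding a_def using assms by simp
    moreover have "r - a (Suc k) > 0" unfolding rec using Suc p0 r0 by simp
    ultimately show ?case by simp
  qed
  have ebnd: "r - a k \<le> r * q ^ k" for k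
  proof (induction k)
    case 0 then show ?case using bnd[of 0] by (simp add: a_def)
  next
    case (Suc k)
    have "r - a (Suc k) = p * (r + a k) * (r - a k)" by (rule rec)
    also have "\<dots> \<le> q * (r - a k)"
      unfolding q_def using bnd[of k] p0 by (intro mult_right_mono) auto
    also have "\<dots> \<le> q * (r * q ^ k)" using Suc q0 by simp
    finally show ?case by (simp add: algebra_simps)
  qed
  have lim0: "(\<lambda>k. r * q ^ k) \<longlonglongrightarrow> 0"
    using q0 q1 by (intro tendsto_mult_right_zero LIMSEQ_power_zero) auto
  have "(\<lambda>k. r - a k) \<longlonglongrightarrow> 0"
    by (rule tendsto_sandwich[of "\<lambda>_. 0" _ _ "\<lambda>k. r * q ^ k"])
       (use bnd ebnd lim0 in \<open>auto simp: less_imp_le\<close>)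
  hence conv: "a \<longlonglongrightarrow> r"
    using tendsto_diff[OF tendsto_const[of r], of "\<lambda>k. r - a k" 0] by simp
  have ident: "(r - a k) / q ^ k = r * (\<Prod>j<k. b j)" for k
  proof (induction k)
    case 0 then show ?case by (simp add: a_def)
  next
    case (Suc k)
    have "(r - a (Suc k)) / q ^ Suc k = (p * (r + a k) / q) * ((r - a k) / q ^ k)"
      unfolding rec by (simp add: field_simps)
    also have "p * (r + a k) / q = b k" unfolding b_def q_def using p0 r0 by simp
    finally show ?case using Suc by (simp add: algebra_simps)
  qed
  have bpos: "b j > 0" for j unfolding b_def using bnd[of j] r0 by simp
  have ble: "b j \<le> 1" for j unfolding b_def using bnd[of j] r0 by simp
  have b0: "b 0 = 1/2" unfolding b_def using r0 by (simp add: a_def)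
  have "summable (\<lambda>j. norm (b j - 1))"
  proof (rule summable_comparison_test[of _ "\<lambda>j. q ^ j / 2"])
    show "\<exists>N. \<forall>n\<ge>N. norm (norm (b n - 1)) \<le> q ^ n / 2"
    proof (intro exI allI impI)
      fix n
      have "norm (norm (b n - 1)) = (r - a n) / (2 * r)"
        unfolding b_def using bnd[of n] r0 by (simp add: field_simps)
      also have "\<dots> \<le> (r * q ^ n) / (2 * r)"
        using ebnd[of n] r0 by (intro divide_right_mono) auto
      also have "\<dots> = q ^ n / 2" using r0 by simp
      finally show "norm (norm (b n - 1)) \<le> q ^ n / 2" .
    qed
    show "summable (\<lambda>j. q ^ j / 2)"
      using q0 q1 by (intro summable_divide summable_geometric) auto
  qed
  hence cp: "convergent_prod b"
    by (intro abs_convergent_prod_imp_convergent_prod summable_imp_abs_convergent_prod)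
  define P where "P = prodinf b"
  have hp: "b has_prod P" using cp unfolding P_def by (simp add: convergent_prod_has_prod)
  have Pnz: "P \<noteq> 0" unfolding P_def using prodinf_nonzero[OF cp] bpos
    by (metis less_irrefl)
  have plim: "(\<lambda>n. \<Prod>i\<le>n. b i) \<longlonglongrightarrow> P" unfolding P_def by (rule convergent_prod_LIMSEQ[OF cp])
  have plim': "(\<lambda>n. \<Prod>i<n. b i) \<longlonglongrightarrow> P"
  proof -
    have "(\<lambda>n. \<Prod>i<Suc n. b i) \<longlonglongrightarrow> P" using plim by (simp add: lessThan_Suc_atMost)
    thus ?thesis by (rule LIMSEQ_imp_Suc)
  qed
  have Ple: "P \<le> 1/2"
  proof (rule LIMSEQ_le_const2[OF plim], intro exI allI impI)
    fix n :: nat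
    have "(\<Prod>i\<le>n. b i) = b 0 * (\<Prod>i\<in>{1..n}. b i)"
      by (simp add: atMost_atLeast0 prod.atLeast_Suc_atMost)
    also have "(\<Prod>i\<in>{1..n}. b i) \<le> 1"
      using bpos ble by (intro prod_le_1) (auto simp: less_imp_le)
    hence "b 0 * (\<Prod>i\<in>{1..n}. b i) \<le> 1/2" unfolding b0 by simp
    finally show "(\<Prod>i\<le>n. b i) \<le> 1/2" .
  qed
  have Pge: "P \<ge> 0"
  proof (rule LIMSEQ_le_const[OF plim], intro exI allI impI)
    fix n :: nat
    show "0 \<le> (\<Prod>i\<le>n. b i)" by (rule prod_nonneg) (simp add: less_imp_le[OF bpos])
  qed
  have Ppos: "P > 0" using Pge Pnz by simp
  have L: "(\<lambda>k. (r - a k) / q ^ k) \<longlonglongrightarrow> r * P"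
    unfolding ident by (intro tendsto_mult tendsto_const plim')
  have "r * P \<le> r * (1/2)" using Ple r0 by (intro mult_left_mono) auto
  hence RP: "r * P < 1" using r1 by linarith
  have RP0: "0 < r * P" using r0 Ppos by simp
  show ?thesis
    apply (rule conjI)
     apply (rule conv[unfolded a_def])
    apply (rule exI[of _ "r * P"], rule exI[of _ P])
    apply (intro conjI)
    using L apply (simp only: a_def q_def)
    using hp apply (simp only: b_def a_def)
    using RP0 RP by simp_all
qed

end
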